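(* Let $\mathcal V \subset B(H)$ be an operator system and $p \in \mathcal V$ be a projection. Set $q = I-p$. Then for every $n \in \mathbb{N}$ and $x \in M_n(\mathcal V)$ we have that $x \in C_n$ if and only if $\begin{pmatrix} x & x \\ x & x \end{pmatrix} \in C(p_n \oplus q_n)$.
   Context: Here $C_n = M_n(\mathcal V) \cap B(H^n)^+$ is the positive cone of $M_n(\mathcal V)$, $p_n = I_n \otimes p$, $q_n = I_n \otimes q$, and $C(p_n \oplus q_n) = \{ y \in M_{2n}(\mathcal V) : y = y^*, \ (p_n \oplus q_n) y (p_n \oplus q_n) \in B(H^{2n})^+\}$, where $M_{2n}(\mathcal V)$ is identified with $M_2(M_n(\mathcal V))$. *)

theory Defs
  imports Complex_Main
begin

(* A complex Hilbert space H is modelled by a type 'h with addition, a complex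
   scalar multiplication sc and an inner product ip (linear in the first argument). *)

definition hnorm :: "('h \<Rightarrow> 'h \<Rightarrow> complex) \<Rightarrow> 'h \<Rightarrow> real" where
  "hnorm ip u = sqrt (Re (ip u u))"

definition hilbert_space :: "(complex \<Rightarrow> 'h::ab_group_add \<Rightarrow> 'h) \<Rightarrow> ('h \<Rightarrow> 'h \<Rightarrow> complex) \<Rightarrow> bool" where
  "hilbert_space sc ip \<longleftrightarrow>
     vector_space (sc :: complex \<Rightarrow> 'h \<Rightarrow> 'h) \<and>
     (\<forall>a u w v. ip (sc a u + w) v = a * ip u v + ip w v) \<and>
     (\<forall>u v. ip v u = cnj (ip u v)) \<and>
     (\<forall>u. Im (ip u u) = 0 \<and> Re (ip u u) \<ge> 0) \<and>
     (\<forall>u. ip u u = 0 \<longrightarrow> u = 0) \<and>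
     (\<forall>X. (\<forall>e>0. \<exists>N::nat. \<forall>m\<ge>N. \<forall>k\<ge>N. hnorm ip (X m - X k) < e)
          \<longrightarrow> (\<exists>L. \<forall>e>0. \<exists>N::nat. \<forall>m\<ge>N. hnorm ip (X m - L) < e))"

definition bounded_op :: "(complex \<Rightarrow> 'h::ab_group_add \<Rightarrow> 'h) \<Rightarrow> ('h \<Rightarrow> 'h \<Rightarrow> complex) \<Rightarrow> ('h \<Rightarrow> 'h) \<Rightarrow> bool" where
  "bounded_op sc ip T \<longleftrightarrow>
     (\<forall>a u v. T (sc a u + v) = sc a (T u) + T v) \<and>
     (\<exists>K. \<forall>u. hnorm ip (T u) \<le> K * hnorm ip u)"

definition is_adjoint :: "('h \<Rightarrow> 'h \<Rightarrow> complex) \<Rightarrow> ('h \<Rightarrow> 'h) \<Rightarrow> ('h \<Rightarrow> 'h) \<Rightarrow> bool" where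
  "is_adjoint ip T S \<longleftrightarrow> (\<forall>u v. ip (T u) v = ip u (S v))"

definition operator_system :: "(complex \<Rightarrow> 'h::ab_group_add \<Rightarrow> 'h) \<Rightarrow> ('h \<Rightarrow> 'h \<Rightarrow> complex) \<Rightarrow> ('h \<Rightarrow> 'h) set \<Rightarrow> bool" where
  "operator_system sc ip V \<longleftrightarrow>
     V \<subseteq> {T. bounded_op sc ip T} \<and> id \<in> V \<and>
     (\<forall>S\<in>V. \<forall>T\<in>V. \<forall>a. (\<lambda>u. sc a (S u) + T u) \<in> V) \<and>
     (\<forall>T\<in>V. \<exists>S\<in>V. is_adjoint ip T S)"

definition is_projection :: "(complex \<Rightarrow> 'h::ab_group_add \<Rightarrow> 'h) \<Rightarrow> ('h \<Rightarrow> 'h \<Rightarrow> complex) \<Rightarrow> ('h \<Rightarrow> 'h) \<Rightarrow> bool" where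
  "is_projection sc ip p \<longleftrightarrow> bounded_op sc ip p \<and> p \<circ> p = p \<and> is_adjoint ip p p"

definition in_Mn :: "('h \<Rightarrow> 'h) set \<Rightarrow> nat \<Rightarrow> (nat \<Rightarrow> nat \<Rightarrow> ('h \<Rightarrow> 'h)) \<Rightarrow> bool" where
  "in_Mn V n x \<longleftrightarrow> (\<forall>i<n. \<forall>j<n. x i j \<in> V)"

(* the matrix y, acting on H^n, is a positive operator in B(H^n) *)
definition pos_Hn :: "('h::ab_group_add \<Rightarrow> 'h \<Rightarrow> complex) \<Rightarrow> nat \<Rightarrow> (nat \<Rightarrow> nat \<Rightarrow> ('h \<Rightarrow> 'h)) \<Rightarrow> bool" where
  "pos_Hn ip n y \<longleftrightarrow>
     (\<forall>u :: nat \<Rightarrow> 'h. Im (\<Sum>i<n. ip (\<Sum>j<n. y i j (u j)) (u i)) = 0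
                    \<and> Re (\<Sum>i<n. ip (\<Sum>j<n. y i j (u j)) (u i)) \<ge> 0)"

definition selfadj_Mn :: "('h \<Rightarrow> 'h \<Rightarrow> complex) \<Rightarrow> nat \<Rightarrow> (nat \<Rightarrow> nat \<Rightarrow> ('h \<Rightarrow> 'h)) \<Rightarrow> bool" where
  "selfadj_Mn ip n y \<longleftrightarrow> (\<forall>i<n. \<forall>j<n. is_adjoint ip (y i j) (y j i))"

definition cone_C :: "('h::ab_group_add \<Rightarrow> 'h \<Rightarrow> complex) \<Rightarrow> ('h \<Rightarrow> 'h) set \<Rightarrow> nat \<Rightarrow> (nat \<Rightarrow> nat \<Rightarrow> ('h \<Rightarrow> 'h)) \<Rightarrow> bool" where
  "cone_C ip V n x \<longleftrightarrow> in_Mn V n x \<and> pos_Hn ip n x"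

(* p_n \<oplus> q_n as a diagonal 2n x 2n matrix, given by its diagonal entries *)
definition diag_pq :: "nat \<Rightarrow> ('h \<Rightarrow> 'h) \<Rightarrow> ('h::ab_group_add \<Rightarrow> 'h) \<Rightarrow> nat \<Rightarrow> ('h \<Rightarrow> 'h)" where
  "diag_pq n p q i = (if i < n then p else q)"

(* C(P) for a diagonal 2n x 2n matrix P with diagonal d:
   y \<in> M_{2n}(V), y = y^*, and P y P \<in> B(H^{2n})^+ *)
definition cone_CP :: "('h::ab_group_add \<Rightarrow> 'h \<Rightarrow> complex) \<Rightarrow> ('h \<Rightarrow> 'h) set \<Rightarrow> nat \<Rightarrow> (nat \<Rightarrow> ('h \<Rightarrow> 'h))
     \<Rightarrow> (nat \<Rightarrow> nat \<Rightarrow> ('h \<Rightarrow> 'h)) \<Rightarrow> bool" where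
  "cone_CP ip V m d y \<longleftrightarrow> in_Mn V m y \<and> selfadj_Mn ip m y \<and>
     pos_Hn ip m (\<lambda>i j. d i \<circ> y i j \<circ> d j)"

(* the block matrix [[x, x], [x, x]] in M_2(M_n(V)) = M_{2n}(V) *)
definition block_xx :: "nat \<Rightarrow> (nat \<Rightarrow> nat \<Rightarrow> 'a) \<Rightarrow> nat \<Rightarrow> nat \<Rightarrow> 'a" where
  "block_xx n x i j = x (i mod n) (j mod n)"

end

theory Submission
  imports Defs
begin

lemma sum_split2: "(\<Sum>i<2*(n::nat). f i) = (\<Sum>i<n. f i) + (\<Sum>i<n. f (i+n))"
proof -
  have "(\<Sum>i<2*n. f i) = (\<Sum>i\<in>{0..<n}. f i) + (\<Sum>i\<in>{n..<n+n}. f i)"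
    by (simp add: atLeast0LessThan[symmetric] sum.atLeastLessThan_concat mult_2)
  also have "(\<Sum>i\<in>{n..<n+n}. f i) = (\<Sum>i<n. f (i+n))"
    using sum.shift_bounds_nat_ivl[of f 0 n n] by (simp add: atLeast0LessThan add.commute)
  finally show ?thesis by (simp add: atLeast0LessThan)
qed

context
  fixes sc :: "complex \<Rightarrow> 'h::ab_group_add \<Rightarrow> 'h" and ip :: "'h \<Rightarrow> 'h \<Rightarrow> complex"
  assumes hs: "hilbert_space sc ip"
begin

lemma sc_one: "sc 1 u = u"
  using hs unfolding hilbert_space_def vector_space_def by blast

lemma ip_lin: "ip (sc a u + w) v = a * ip u v + ip w v"
  using hs unfolding hilbert_space_def by blast

lemma ip_conj: "ip v u = cnj (ip u v)"
  using hs unfolding hilbert_space_def by blast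

lemma ip_add1: "ip (u + w) v = ip u v + ip w v"
  using ip_lin[of 1 u w v] by (simp add: sc_one)

lemma ip_zero1[simp]: "ip 0 v = 0"
  using ip_add1[of 0 0 v] by simp

lemma ip_scale1: "ip (sc a u) v = a * ip u v"
  using ip_lin[of a u 0 v] by simp

lemma ip_minus1: "ip (u - w) v = ip u v - ip w v"
  using ip_add1[of "u - w" w v] by simp

lemma ip_add2: "ip v (u + w) = ip v u + ip v w"
  by (metis ip_conj ip_add1 complex_cnj_add)

lemma ip_zero2[simp]: "ip v 0 = 0"
  by (metis ip_conj ip_zero1 complex_cnj_zero)

lemma ip_scale2: "ip v (sc a u) = cnj a * ip v u"
  by (metis ip_conj ip_scale1 complex_cnj_mult)

lemma ip_minus2: "ip v (u - w) = ip v u - ip v w"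
  by (metis ip_conj ip_minus1 complex_cnj_diff)

lemma ip_sum1: "ip (sum f A) v = (\<Sum>j\<in>A. ip (f j) v)"
  by (induct A rule: infinite_finite_induct) (auto simp: ip_add1)

lemma ip_sum2: "ip v (sum f A) = (\<Sum>j\<in>A. ip v (f j))"
  by (induct A rule: infinite_finite_induct) (auto simp: ip_add2)

lemma op_lin: "bounded_op sc ip T \<Longrightarrow> T (sc a u + w) = sc a (T u) + T w"
  unfolding bounded_op_def by blast

lemma op_zero: "bounded_op sc ip T \<Longrightarrow> T 0 = 0"
  using op_lin[of T 1 0 0] by (simp add: sc_one)

lemma op_add: "bounded_op sc ip T \<Longrightarrow> T (u + w) = T u + T w"
  using op_lin[of T 1 u w] by (simp add: sc_one)

end

definition sf :: "('h \<Rightarrow> 'h \<Rightarrow> complex) \<Rightarrow> nat \<Rightarrow> (nat \<Rightarrow> nat \<Rightarrow> 'h \<Rightarrow> 'h) \<Rightarrow> (nat \<Rightarrow> 'h) \<Rightarrow> (nat \<Rightarrow> 'h) \<Rightarrow> complex" where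
  "sf ip n x u w = (\<Sum>i<n. \<Sum>j<n. ip (x i j (u j)) (w i))"

context
  fixes sc :: "complex \<Rightarrow> 'h::ab_group_add \<Rightarrow> 'h" and ip :: "'h \<Rightarrow> 'h \<Rightarrow> complex"
    and n :: nat and x :: "nat \<Rightarrow> nat \<Rightarrow> 'h \<Rightarrow> 'h"
  assumes hs: "hilbert_space sc ip"
    and bx: "\<And>i j. i < n \<Longrightarrow> j < n \<Longrightarrow> bounded_op sc ip (x i j)"
begin

lemma Q_sf: "(\<Sum>i<n. ip (\<Sum>j<n. x i j (u j)) (u i)) = sf ip n x u u"
  unfolding sf_def by (simp add: ip_sum1[OF hs])

lemma sf_lin1: "sf ip n x (\<lambda>j. sc c (u j) + w j) t = c * sf ip n x u t + sf ip n x w t"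
proof -
  have "sf ip n x (\<lambda>j. sc c (u j) + w j) t = (\<Sum>i<n. \<Sum>j<n. c * ip (x i j (u j)) (t i) + ip (x i j (w j)) (t i))"
    unfolding sf_def by (intro sum.cong refl) (simp add: op_lin[OF hs bx] ip_lin[OF hs])
  then show ?thesis unfolding sf_def by (simp add: sum.distrib sum_distrib_left)
qed

lemma sf_lin2: "sf ip n x t (\<lambda>i. sc c (u i) + w i) = cnj c * sf ip n x t u + sf ip n x t w"
proof -
  have "sf ip n x t (\<lambda>i. sc c (u i) + w i) = (\<Sum>i<n. \<Sum>j<n. cnj c * ip (x i j (t j)) (u i) + ip (x i j (t j)) (w i))"
    unfolding sf_def by (intro sum.cong refl) (simp add: ip_add2[OF hs] ip_scale2[OF hs])
  then show ?thesis unfolding sf_def by (simp add: sum.distrib sum_distrib_left)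
qed

lemma sf_add1: "sf ip n x (\<lambda>j. u j + w j) t = sf ip n x u t + sf ip n x w t"
  using sf_lin1[of 1 u w t] by (simp add: sc_one[OF hs])

lemma sf_add2: "sf ip n x t (\<lambda>j. u j + w j) = sf ip n x t u + sf ip n x t w"
  using sf_lin2[of t 1 u w] by (simp add: sc_one[OF hs])

lemma polar:
  assumes re: "\<And>u. Im (sf ip n x u u) = 0"
  shows "sf ip n x u w = cnj (sf ip n x w u)"
proof -
  have e: "sf ip n x (\<lambda>j. sc c (w j) + u j) (\<lambda>j. sc c (w j) + u j)
     = c * (cnj c * sf ip n x w w + sf ip n x w u) + (cnj c * sf ip n x u w + sf ip n x u u)" for c
    by (simp add: sf_lin1 sf_lin2)
  have g: "Im (c * (cnj c * sf ip n x w w + sf ip n x w u) + (cnj c * sf ip n x u w + sf ip n x u u)) = 0" for c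
    using e[of c] re[of "\<lambda>j. sc c (w j) + u j"] by metis
  have 1: "Im (sf ip n x w u + sf ip n x u w) = 0"
    using g[of 1] re[of w] re[of u] by simp
  have 2: "Re (sf ip n x w u) - Re (sf ip n x u w) = 0"
    using g[of "\<i>"] re[of w] re[of u] by simp
  show ?thesis using 1 2 by (simp add: complex_eq_iff)
qed

lemma sf_delta:
  assumes "a < n" "b < n"
  shows "sf ip n x (\<lambda>j. if j = b then v else 0) (\<lambda>i. if i = a then z else 0) = ip (x a b v) z"
proof -
  have "\<And>i j. i < n \<Longrightarrow> j < n \<Longrightarrow> ip (x i j (if j = b then v else 0)) (if i = a then z else 0)
        = (if i = a then (if j = b then ip (x a b v) z else 0) else 0)"
    by (auto simp: op_zero[OF hs bx] ip_zero1[OF hs] ip_zero2[OF hs])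
  then have "sf ip n x (\<lambda>j. if j = b then v else 0) (\<lambda>i. if i = a then z else 0)
     = (\<Sum>i<n. (if i = a then (\<Sum>j<n. if j = b then ip (x a b v) z else 0) else 0))"
    unfolding sf_def by (intro sum.cong refl) auto
  then show ?thesis using assms by simp
qed

lemma pos_selfadj:
  assumes "pos_Hn ip n x"
  shows "selfadj_Mn ip n x"
proof -
  have re: "Im (sf ip n x u u) = 0" for u using assms unfolding pos_Hn_def Q_sf by blast
  show ?thesis unfolding selfadj_Mn_def is_adjoint_def
  proof (intro allI impI)
    fix a b u v assume ab: "a < n" "b < n"
    have "ip (x a b u) v = sf ip n x (\<lambda>j. if j = b then u else 0) (\<lambda>i. if i = a then v else 0)"
      using sf_delta ab by simp
    also have "\<dots> = cnj (sf ip n x (\<lambda>i. if i = a then v else 0) (\<lambda>j. if j = b then u else 0))"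
      by (rule polar[OF re])
    also have "\<dots> = cnj (ip (x b a v) u)" using sf_delta ab by simp
    also have "\<dots> = ip u (x b a v)" by (rule ip_conj[OF hs, symmetric])
    finally show "ip (x a b u) v = ip u (x b a v)" .
  qed
qed

end

lemma sf_cong: "(\<And>j. j < n \<Longrightarrow> u j = u' j) \<Longrightarrow> (\<And>j. j < n \<Longrightarrow> w j = w' j) \<Longrightarrow> sf ip n x u w = sf ip n x u' w'"
  unfolding sf_def by (intro sum.cong refl) auto

context
  fixes sc :: "complex \<Rightarrow> 'h::ab_group_add \<Rightarrow> 'h" and ip :: "'h \<Rightarrow> 'h \<Rightarrow> complex"
    and n :: nat and x :: "nat \<Rightarrow> nat \<Rightarrow> 'h \<Rightarrow> 'h" and p :: "'h \<Rightarrow> 'h"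
  assumes hs: "hilbert_space sc ip"
    and bx: "\<And>i j. i < n \<Longrightarrow> j < n \<Longrightarrow> bounded_op sc ip (x i j)"
    and pp: "is_projection sc ip p"
begin

lemma d_adj: "ip (diag_pq n p (\<lambda>u. u - p u) i z) w = ip z (diag_pq n p (\<lambda>u. u - p u) i w)"
proof -
  have pa: "ip (p z) w = ip z (p w)" for z w using pp unfolding is_projection_def is_adjoint_def by blast
  show ?thesis unfolding diag_pq_def
    by (simp add: pa ip_minus1[OF hs] ip_minus2[OF hs])
qed

lemma block_Q:
  fixes u :: "nat \<Rightarrow> 'h"
  defines "d \<equiv> diag_pq n p (\<lambda>u. u - p u)"
  defines "w \<equiv> \<lambda>j. d j (u j)"
  shows "(\<Sum>i<2*n. ip (\<Sum>j<2*n. (d i \<circ> block_xx n x i j \<circ> d j) (u j)) (u i))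
     = sf ip n x (\<lambda>b. w b + w (b+n)) (\<lambda>b. w b + w (b+n))"
proof -
  define f where "f i j = ip (x (i mod n) (j mod n) (w j)) (w i)" for i j
  have "(\<Sum>i<2*n. ip (\<Sum>j<2*n. (d i \<circ> block_xx n x i j \<circ> d j) (u j)) (u i))
      = (\<Sum>i<2*n. \<Sum>j<2*n. f i j)"
    unfolding f_def w_def d_def by (simp add: ip_sum1[OF hs] d_adj block_xx_def)
  also have "\<dots> = (\<Sum>a<n. (\<Sum>b<n. f a b) + (\<Sum>b<n. f a (b+n))) + (\<Sum>a<n. (\<Sum>b<n. f (a+n) b) + (\<Sum>b<n. f (a+n) (b+n)))"
    by (simp add: sum_split2)
  also have "\<dots> = sf ip n x w w + sf ip n x (\<lambda>b. w (b+n)) w + (sf ip n x w (\<lambda>b. w (b+n)) + sf ip n x (\<lambda>b. w (b+n)) (\<lambda>b. w (b+n)))"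
    unfolding sf_def f_def by (simp add: sum.distrib)
  also have "\<dots> = sf ip n x (\<lambda>b. w b + w (b+n)) (\<lambda>b. w b + w (b+n))"
    by (simp add: sf_add1[OF hs bx] sf_add2[OF hs bx])
  finally show ?thesis .
qed

end

theorem theorem5p3:
  fixes sc :: "complex \<Rightarrow> 'h::ab_group_add \<Rightarrow> 'h"
    and ip :: "'h \<Rightarrow> 'h \<Rightarrow> complex"
    and V :: "('h \<Rightarrow> 'h) set"
    and p :: "'h \<Rightarrow> 'h"
    and n :: nat
    and x :: "nat \<Rightarrow> nat \<Rightarrow> ('h \<Rightarrow> 'h)"
  assumes "hilbert_space sc ip"
    and "operator_system sc ip V"
    and "p \<in> V"
    and "is_projection sc ip p"
    and "in_Mn V n x"
  shows "cone_C ip V n x \<longleftrightarrow>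
         cone_CP ip V (2 * n) (diag_pq n p (\<lambda>u. u - p u)) (block_xx n x)"
proof -
  note hs = assms(1) and pp = assms(4)
  have bx: "\<And>i j. i < n \<Longrightarrow> j < n \<Longrightarrow> bounded_op sc ip (x i j)"
    using assms(2,5) unfolding operator_system_def in_Mn_def by blast
  define d where "d = diag_pq n p (\<lambda>u. u - p u)"
  have modn: "i < 2 * n \<Longrightarrow> i mod n < n" for i by (cases "n = 0") auto
  have inM: "in_Mn V (2 * n) (block_xx n x)"
    using assms(5) modn unfolding in_Mn_def block_xx_def by blast
  have BQ: "(\<Sum>i<2*n. ip (\<Sum>j<2*n. (d i \<circ> block_xx n x i j \<circ> d j) (u j)) (u i))
     = sf ip n x (\<lambda>b. d b (u b) + d (b+n) (u (b+n))) (\<lambda>b. d b (u b) + d (b+n) (u (b+n)))" for u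
    unfolding d_def by (rule block_Q[OF hs bx pp])
  show ?thesis
  proof
    assume "cone_C ip V n x"
    then have pos: "pos_Hn ip n x" unfolding cone_C_def by blast
    have sa: "selfadj_Mn ip n x" by (rule pos_selfadj[OF hs bx pos])
    have sa2: "selfadj_Mn ip (2 * n) (block_xx n x)"
      using sa modn unfolding selfadj_Mn_def block_xx_def by blast
    have "pos_Hn ip (2 * n) (\<lambda>i j. d i \<circ> block_xx n x i j \<circ> d j)"
    proof -
      have "Im (sf ip n x v v) = 0 \<and> 0 \<le> Re (sf ip n x v v)" for v
      proof -
        have q: "(\<Sum>i<n. ip (\<Sum>j<n. x i j (v j)) (v i)) = sf ip n x v v" by (rule Q_sf[OF hs bx])
        show ?thesis using pos unfolding pos_Hn_def q[symmetric] by blast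
      qed
      then show ?thesis unfolding pos_Hn_def BQ by blast
    qed
    then show "cone_CP ip V (2 * n) (diag_pq n p (\<lambda>u. u - p u)) (block_xx n x)"
      unfolding cone_CP_def d_def using inM sa2 by blast
  next
    assume "cone_CP ip V (2 * n) (diag_pq n p (\<lambda>u. u - p u)) (block_xx n x)"
    then have pos2: "pos_Hn ip (2 * n) (\<lambda>i j. d i \<circ> block_xx n x i j \<circ> d j)"
      unfolding cone_CP_def d_def by blast
    have "Im (sf ip n x v v) = 0 \<and> 0 \<le> Re (sf ip n x v v)" for v
    proof -
      define u where "u i = v (i mod n)" for i
      have e: "sf ip n x (\<lambda>b. d b (u b) + d (b+n) (u (b+n))) (\<lambda>b. d b (u b) + d (b+n) (u (b+n)))
          = sf ip n x v v"
        by (rule sf_cong) (simp_all add: d_def diag_pq_def u_def)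
      have h: "Im (sf ip n x (\<lambda>b. d b (u b) + d (b+n) (u (b+n))) (\<lambda>b. d b (u b) + d (b+n) (u (b+n)))) = 0
         \<and> 0 \<le> Re (sf ip n x (\<lambda>b. d b (u b) + d (b+n) (u (b+n))) (\<lambda>b. d b (u b) + d (b+n) (u (b+n))))"
        using pos2 unfolding pos_Hn_def BQ by blast
      show ?thesis using h by (simp only: e)
    qed
    then have "pos_Hn ip n x" unfolding pos_Hn_def
    proof (intro allI)
      fix v :: "nat \<Rightarrow> 'h"
      assume a: "\<And>v. Im (sf ip n x v v) = 0 \<and> 0 \<le> Re (sf ip n x v v)"
      have q: "(\<Sum>i<n. ip (\<Sum>j<n. x i j (v j)) (v i)) = sf ip n x v v" by (rule Q_sf[OF hs bx])
      show "Im (\<Sum>i<n. ip (\<Sum>j<n. x i j (v j)) (v i)) = 0 \<and> 0 \<le> Re (\<Sum>i<n. ip (\<Sum>j<n. x i j (v j)) (v i))"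
        unfolding q by (rule a)
    qed
    then show "cone_C ip V n x" unfolding cone_C_def using assms(5) by blast
  qed
qed

end
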